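(* Let $f:\{-1,1\}^n\to\mathbb{R}$, $f=\sum_{S\subseteq[n]}c_S\chi_S$, be approximately $(s,\nu)$-sparse with respect to $\mathcal{I}\subseteq2^{[n]}$, $|\mathcal{I}|=s$, and let $f_{\mathcal{I}}=\sum_{S\in\mathcal{I}}c_S\chi_S$. Suppose samples $\mathbf{x}_i\in\{-1,1\}^n$ are observed as $y_i=f(\mathbf{x}_i)+\varepsilon_i$ with $|\varepsilon_i|\le\epsilon$, and suppose any two distinct values of $f_{\mathcal{I}}$ differ by at least $4(\epsilon+\nu)$. Let $\eta=\max_i y_i$ over the drawn samples, and let $\mathbf{X}_{\max}$ consist of all drawn $\mathbf{x}_i$ with $|y_i-\eta|\le 2(\epsilon+\nu)$ (Algorithm MaxCluster). Then $\mathbf{X}_{\max}$ contains exactly those drawn inputs $\mathbf{x}_i$ at which $f_{\mathcal{I}}$ attains its maximum value among the drawn samples.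
   Context: $\chi_S(\mathbf{x})=\prod_{j\in S}x_j$. $f$ is approximately $(s,\nu)$-sparse with respect to $\mathcal{I}$ if $\sum_{S\notin\mathcal{I}}|c_S|<\nu$. *)

theory Defs
  imports Main "HOL-Library.Library"
begin

text \<open>Points of the hypercube {-1,1}^n are modelled as functions nat => real whose
  values at coordinates j < n lie in {-1,1} (other coordinates are irrelevant).\<close>

definition hypercube :: "nat \<Rightarrow> (nat \<Rightarrow> real) set" where
  "hypercube n = {x. \<forall>j<n. x j = 1 \<or> x j = -1}"

definition chi :: "nat set \<Rightarrow> (nat \<Rightarrow> real) \<Rightarrow> real" where
  "chi S x = (\<Prod>j\<in>S. x j)"

definition fourier_sum :: "nat set set \<Rightarrow> (nat set \<Rightarrow> real) \<Rightarrow> (nat \<Rightarrow> real) \<Rightarrow> real" where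
  "fourier_sum F c x = (\<Sum>S\<in>F. c S * chi S x)"

definition approx_sparse ::
  "nat \<Rightarrow> (nat set \<Rightarrow> real) \<Rightarrow> nat \<Rightarrow> real \<Rightarrow> nat set set \<Rightarrow> bool" where
  "approx_sparse n c s \<nu> I \<longleftrightarrow>
     I \<subseteq> Pow {..<n} \<and> card I = s \<and> (\<Sum>S\<in>Pow {..<n} - I. \<bar>c S\<bar>) < \<nu>"

end

theory Submission
  imports Defs
begin

lemma chi_abs: assumes "x \<in> hypercube n" "S \<subseteq> {..<n}" shows "\<bar>chi S x\<bar> = 1"
proof -
  have "\<bar>chi S x\<bar> = (\<Prod>j\<in>S. \<bar>x j\<bar>)" unfolding chi_def by (simp add: abs_prod)
  also have "\<dots> = (\<Prod>j\<in>S. 1)"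
    using assms unfolding hypercube_def by (intro prod.cong) auto
  finally show ?thesis by simp
qed

lemma tail_bound:
  assumes sp: "approx_sparse n c s \<nu> I" and x: "x \<in> hypercube n"
  shows "\<bar>fourier_sum (Pow {..<n}) c x - fourier_sum I c x\<bar> < \<nu>"
proof -
  have I: "I \<subseteq> Pow {..<n}" and t: "(\<Sum>S\<in>Pow {..<n} - I. \<bar>c S\<bar>) < \<nu>"
    using sp unfolding approx_sparse_def by auto
  have fin: "finite (Pow {..<n})" by simp
  have "fourier_sum (Pow {..<n}) c x = fourier_sum I c x + (\<Sum>S\<in>Pow {..<n} - I. c S * chi S x)"
    unfolding fourier_sum_def using sum.subset_diff[OF I fin] by (simp add: add.commute)
  hence "\<bar>fourier_sum (Pow {..<n}) c x - fourier_sum I c x\<bar> = \<bar>\<Sum>S\<in>Pow {..<n} - I. c S * chi S x\<bar>"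
    by simp
  also have "\<dots> \<le> (\<Sum>S\<in>Pow {..<n} - I. \<bar>c S * chi S x\<bar>)" by (rule sum_abs)
  also have "\<dots> = (\<Sum>S\<in>Pow {..<n} - I. \<bar>c S\<bar>)"
    by (intro sum.cong) (auto simp: abs_mult chi_abs[OF x])
  finally show ?thesis using t by linarith
qed

theorem lemma3:
  fixes n s m :: nat and c :: "nat set \<Rightarrow> real" and I :: "nat set set"
    and \<nu> \<epsilon> :: real and xs :: "nat \<Rightarrow> (nat \<Rightarrow> real)"
    and y e :: "nat \<Rightarrow> real"
  assumes sparse: "approx_sparse n c s \<nu> I"
    and m_pos: "m \<ge> 1"
    and xs_cube: "\<And>i. i < m \<Longrightarrow> xs i \<in> hypercube n"
    and obs: "\<And>i. i < m \<Longrightarrow> y i = fourier_sum (Pow {..<n}) c (xs i) + e i"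
    and noise: "\<And>i. i < m \<Longrightarrow> \<bar>e i\<bar> \<le> \<epsilon>"
    and sep: "\<And>u v. u \<in> hypercube n \<Longrightarrow> v \<in> hypercube n \<Longrightarrow>
               fourier_sum I c u \<noteq> fourier_sum I c v \<Longrightarrow>
               \<bar>fourier_sum I c u - fourier_sum I c v\<bar> \<ge> 4 * (\<epsilon> + \<nu>)"
  shows "{i. i < m \<and> \<bar>y i - Max (y ` {..<m})\<bar> \<le> 2 * (\<epsilon> + \<nu>)}
       = {i. i < m \<and> fourier_sum I c (xs i) = Max ((\<lambda>j. fourier_sum I c (xs j)) ` {..<m})}"
proof -
  define g where "g = (\<lambda>j. fourier_sum I c (xs j))"
  define G where "G = Max (g ` {..<m})"
  define \<eta> where "\<eta> = Max (y ` {..<m})"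
  define d where "d = \<epsilon> + \<nu>"
  have close: "\<bar>y i - g i\<bar> < d" if "i < m" for i
    using tail_bound[OF sparse xs_cube[OF that]] obs[OF that] noise[OF that]
    unfolding g_def d_def by linarith
  have ne: "{..<m} \<noteq> {}" using m_pos by (auto simp: lessThan_empty_iff)
  obtain k where k: "k < m" "g k = G"
  proof -
    have "G \<in> g ` {..<m}" unfolding G_def using ne by (intro Max_in) auto
    thus ?thesis using that by blast
  qed
  obtain j where j: "j < m" "y j = \<eta>"
  proof -
    have "\<eta> \<in> y ` {..<m}" unfolding \<eta>_def using ne by (intro Max_in) auto
    thus ?thesis using that by blast
  qed
  have gle: "g i \<le> G" if "i < m" for i unfolding G_def using that by auto
  have yle: "y i \<le> \<eta>" if "i < m" for i unfolding \<eta>_def using that by auto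
  have e1: "\<eta> > G - d" using yle[OF k(1)] close[OF k(1)] k(2) by linarith
  have e2: "\<eta> < G + d" using j close[OF j(1)] gle[OF j(1)] by linarith
  have "(\<bar>y i - \<eta>\<bar> \<le> 2 * d) = (g i = G)" if i: "i < m" for i
  proof (cases "g i = G")
    case True then show ?thesis using close[OF i] e1 e2 by auto
  next
    case False
    have "\<bar>g i - g k\<bar> \<ge> 4 * d" using sep[OF xs_cube[OF i] xs_cube[OF k(1)]] False k(2)
      unfolding g_def d_def by auto
    hence "G - g i \<ge> 4 * d" using gle[OF i] k(2) by linarith
    then show ?thesis using close[OF i] e1 False yle[OF i] by auto
  qed
  thus ?thesis unfolding g_def G_def \<eta>_def d_def by auto
qed

end
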